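(* Let $G$ be a finite graph with maximum degree $\Delta \geq 2^{64}$, and let $r=\lceil 400\Delta/\log\Delta\rceil$. Then there exists a partition $V(G)=V_1\uplus\cdots\uplus V_r$ such that for every vertex $v\in V(G)$ and every $i\in[r]$, $|N_G(v)\cap V_i| \leq \frac12\log\Delta$.
   Context: $\log$ denotes the logarithm to base 2; $N_G(v)$ is the set of neighbours of $v$ in $G$; $[r]=\{1,\dots,r\}$. Parts of the partition are allowed to be empty. *)

theory Defs
  imports Complex_Main
begin

definition finite_simple_graph :: "'a set \<Rightarrow> ('a \<Rightarrow> 'a \<Rightarrow> bool) \<Rightarrow> bool" where
  "finite_simple_graph V E \<longleftrightarrow> finite V \<and> (\<forall>u v. E u v \<longrightarrow> u \<in> V \<and> v \<in> V)
     \<and> (\<forall>u v. E u v \<longrightarrow> E v u) \<and> (\<forall>v. \<not> E v v)"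

definition neighbours :: "'a set \<Rightarrow> ('a \<Rightarrow> 'a \<Rightarrow> bool) \<Rightarrow> 'a \<Rightarrow> 'a set" where
  "neighbours V E v = {u \<in> V. E v u}"

definition max_degree :: "'a set \<Rightarrow> ('a \<Rightarrow> 'a \<Rightarrow> bool) \<Rightarrow> nat" where
  "max_degree V E = Max (insert 0 ((\<lambda>v. card (neighbours V E v)) ` V))"

end

theory Submission
  imports Defs "HOL-Probability.Product_PMF"
begin


lemma lll:
  fixes P :: "'b pmf" and F :: "'i set" and ev :: "'i \<Rightarrow> 'b set" and G :: "'i \<Rightarrow> 'i set"
  assumes fin: "finite F"
    and Gcard: "\<And>A. A \<in> F \<Longrightarrow> card (G A \<inter> F) \<le> d"
    and p0: "0 \<le> p"
    and pd: "4 * (real d + 1) * p \<le> 1"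
    and indep: "\<And>A T. A \<in> F \<Longrightarrow> T \<subseteq> F \<Longrightarrow> T \<inter> G A = {} \<Longrightarrow> A \<notin> T \<Longrightarrow>
        measure_pmf.prob P (ev A \<inter> {\<omega>. \<forall>B\<in>T. \<omega> \<notin> ev B}) \<le> p * measure_pmf.prob P {\<omega>. \<forall>B\<in>T. \<omega> \<notin> ev B}"
  shows "measure_pmf.prob P {\<omega>. \<forall>B\<in>F. \<omega> \<notin> ev B} > 0"
proof -
  define N where "N = (\<lambda>T. {\<omega>. \<forall>B\<in>T. \<omega> \<notin> ev B})"
  let ?pr = "measure_pmf.prob P"
  have key: "\<forall>A\<in>F - T. ?pr (ev A \<inter> N T) \<le> 2 * p * ?pr (N T)" if "T \<subseteq> F" for T
    using that
  proof (induction "card T" arbitrary: T rule: less_induct)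
    case less
    show ?case
    proof
      fix A assume A: "A \<in> F - T"
      define T1 where "T1 = T \<inter> G A"
      define T2 where "T2 = T - G A"
      have finT: "finite T" using less.prems fin finite_subset by blast
      have i2: "?pr (ev A \<inter> N T2) \<le> p * ?pr (N T2)"
        unfolding N_def using indep[of A T2] A less.prems by (auto simp: T2_def)
      show "?pr (ev A \<inter> N T) \<le> 2 * p * ?pr (N T)"
      proof (cases "T1 = {}")
        case True
        hence "T2 = T" by (auto simp: T1_def T2_def)
        moreover have "0 \<le> p * ?pr (N T)" using p0 by simp
        ultimately show ?thesis using i2 by simp
      next
        case False
        have lt: "card T2 < card T"
          using False finT by (auto simp: T1_def T2_def intro!: psubset_card_mono)
        have IH: "\<forall>B\<in>F - T2. ?pr (ev B \<inter> N T2) \<le> 2 * p * ?pr (N T2)"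
          using less.hyps[OF lt] less.prems by (auto simp: T2_def)
        have eqd: "N T2 - N T = (\<Union>B\<in>T1. ev B \<inter> N T2)"
          by (auto simp: N_def T1_def T2_def)
        have sub: "N T \<subseteq> N T2" by (auto simp: N_def T2_def)
        have "?pr (N T2) - ?pr (N T) = ?pr (N T2 - N T)"
          using sub by (simp add: measure_pmf.finite_measure_Diff)
        also have "\<dots> \<le> (\<Sum>B\<in>T1. ?pr (ev B \<inter> N T2))"
          unfolding eqd
          by (rule measure_pmf.finite_measure_subadditive_finite) (use finT in \<open>auto simp: T1_def\<close>)
        also have "\<dots> \<le> (\<Sum>B\<in>T1. 2 * p * ?pr (N T2))"
          apply (rule sum_mono) using IH less.prems by (auto simp: T1_def T2_def)
        also have "\<dots> = real (card T1) * (2 * p * ?pr (N T2))" by simp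
        also have "\<dots> \<le> real d * (2 * p * ?pr (N T2))"
        proof -
          have "card T1 \<le> card (G A \<inter> F)"
            using less.prems fin by (auto simp: T1_def intro!: card_mono)
          also have "\<dots> \<le> d" using Gcard A by auto
          finally show ?thesis using p0
            by (intro mult_right_mono) (auto simp: measure_nonneg)
        qed
        finally have h1: "?pr (N T2) - ?pr (N T) \<le> real d * (2 * p * ?pr (N T2))" .
        have h2: "real d * (2 * p * ?pr (N T2)) \<le> ?pr (N T2) / 2"
        proof -
          have e: "4*(real d+1)*p = 4*(real d*p) + 4*p" by (simp add: algebra_simps)
          have "real d * (2 * p) \<le> 1/2" using pd p0 e by linarith
          hence "real d * (2 * p) * ?pr (N T2) \<le> 1/2 * ?pr (N T2)"
            by (rule mult_right_mono) simp
          thus ?thesis by (simp add: mult.assoc)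
        qed
        have "?pr (ev A \<inter> N T) \<le> ?pr (ev A \<inter> N T2)"
          using sub by (intro measure_pmf.finite_measure_mono) auto
        also have "\<dots> \<le> p * ?pr (N T2)" by (rule i2)
        also have "\<dots> \<le> p * (2 * ?pr (N T))" using h1 h2 p0 by (intro mult_left_mono) auto
        finally show ?thesis by simp
      qed
    qed
  qed
  have pos: "?pr (N T) > 0" if "T \<subseteq> F" for T
  proof -
    have "finite T" using that fin finite_subset by blast
    thus ?thesis using that
    proof (induction T rule: finite_induct)
      case empty
      then show ?case by (simp add: N_def)
    next
      case (insert A T)
      have k: "?pr (ev A \<inter> N T) \<le> 2 * p * ?pr (N T)" using key[of T] insert by auto
      have "N (insert A T) = N T - (ev A \<inter> N T)" by (auto simp: N_def)
      hence "?pr (N (insert A T)) = ?pr (N T) - ?pr (ev A \<inter> N T)"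
        by (simp add: measure_pmf.finite_measure_Diff)
      moreover have "p \<le> 1/4"
      proof -
        have e: "4*(real d+1)*p = 4*(real d*p) + 4*p" by (simp add: algebra_simps)
        have "real d * p \<ge> 0" using p0 by simp
        thus ?thesis using pd e by linarith
      qed
      moreover have "?pr (N T) > 0" using insert by auto
      moreover have "2 * p * ?pr (N T) \<le> 1/2 * ?pr (N T)"
        using \<open>p \<le> 1/4\<close> by (intro mult_right_mono) simp_all
      ultimately show ?case using k by linarith
    qed
  qed
  show ?thesis using pos[of F] by (simp add: N_def)
qed



lemma prob_pair_times:
  "measure_pmf.prob (pair_pmf M N) (A \<times> B) = measure_pmf.prob M A * measure_pmf.prob N B"
proof -
  have "measure_pmf.prob (pair_pmf M N) (A \<times> B) = measure_pmf.prob (pair_pmf M N) ((A \<times> B) \<inter> set_pmf (pair_pmf M N))"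
    by (metis measure_Int_set_pmf)
  also have "(A \<times> B) \<inter> set_pmf (pair_pmf M N) = (A \<inter> set_pmf M) \<times> (B \<inter> set_pmf N)" by auto
  also have "measure_pmf.prob (pair_pmf M N) \<dots> = measure_pmf.prob M (A \<inter> set_pmf M) * measure_pmf.prob N (B \<inter> set_pmf N)"
    by (rule measure_pmf_prob_product) (auto intro: countable_subset[OF _ countable_set_pmf])
  finally show ?thesis by (simp add: measure_Int_set_pmf)
qed

lemma Pi_pmf_indep:
  fixes p :: "'a \<Rightarrow> 'b pmf"
  assumes fin: "finite V" and SV: "S \<subseteq> V"
   and X: "\<And>f g. (\<forall>u\<in>S. f u = g u) \<Longrightarrow> f \<in> X \<longleftrightarrow> g \<in> X"
   and Y: "\<And>f g. (\<forall>u. u \<notin> S \<longrightarrow> f u = g u) \<Longrightarrow> f \<in> Y \<longleftrightarrow> g \<in> Y"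
  shows "measure_pmf.prob (Pi_pmf V d p) (X \<inter> Y) = measure_pmf.prob (Pi_pmf V d p) X * measure_pmf.prob (Pi_pmf V d p) Y"
proof -
  define h :: "('a \<Rightarrow> 'b) \<times> ('a \<Rightarrow> 'b) \<Rightarrow> 'a \<Rightarrow> 'b" where "h = (\<lambda>(f,g) x. if x \<in> S then f x else g x)"
  define Q where "Q = pair_pmf (Pi_pmf S d p) (Pi_pmf (V - S) d p)"
  have VS: "V = S \<union> (V - S)" using SV by auto
  have finS: "finite S" using fin SV finite_subset by blast
  have PQ: "Pi_pmf V d p = map_pmf h Q"
    unfolding Q_def h_def by (subst VS) (rule Pi_pmf_union, use fin finS in auto)
  have hX: "h (f, g) \<in> X \<longleftrightarrow> f \<in> X" for f g by (rule X) (auto simp: h_def)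
  have hY: "h (f, g) \<in> Y \<longleftrightarrow> g \<in> Y" for f g by (rule Y) (auto simp: h_def)
  have e1: "h -` (X \<inter> Y) = X \<times> Y" using hX hY by auto
  have e2: "h -` X = X \<times> UNIV" using hX by auto
  have e3: "h -` Y = UNIV \<times> Y" using hY by auto
  show ?thesis unfolding PQ measure_map_pmf e1 e2 e3 Q_def prob_pair_times by simp
qed



lemma pow_le_exp_fact:
  fixes K :: real assumes "0 \<le> K"
  shows "K ^ n \<le> exp K * fact n"
proof -
  have "(\<Sum>i\<in>{n}. K^i /\<^sub>R fact i) \<le> (\<Sum>i. K^i /\<^sub>R fact i)"
    by (rule sum_le_suminf) (use summable_exp_generic[of K] assms in auto)
  also have "\<dots> = exp K" by (simp add: exp_def)
  finally have "K ^ n / fact n \<le> exp K" by (simp add: divide_inverse mult.commute)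
  thus ?thesis by (simp add: divide_le_eq mult.commute)
qed

lemma pow_le_3_fact: "real k ^ k \<le> 3 ^ k * fact k"
proof -
  have "real k ^ k \<le> exp (real k) * fact k" by (rule pow_le_exp_fact) simp
  also have "exp (real k) = exp 1 ^ k" using exp_of_nat_mult[of k 1] by simp
  also have "\<dots> \<le> 3 ^ k" by (rule power_mono) (use exp_le in auto)
  finally show ?thesis by (simp add: mult_right_mono)
qed

lemma nat_ineq: "m \<ge> 32 \<Longrightarrow> 4 * 48^(m+1) + 4 \<le> (200::nat)^m"
proof -
  assume m: "m \<ge> 32"
  have "(4::nat)^32 \<le> 4^m" using m by (intro power_increasing) auto
  hence "200 \<le> (4::nat)^m" by simp
  hence "48^m * 200 \<le> 48^m * (4::nat)^m" by simp
  also have "\<dots> = 192^m" by (simp add: power_mult_distrib[symmetric])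
  also have "\<dots> \<le> 200^m" by (intro power_mono) auto
  finally have a: "48^m * 200 \<le> (200::nat)^m" .
  have "(1::nat) \<le> 48^m" by simp
  hence "4 * 48^(m+1) + 4 \<le> (48::nat)^m * 200" by simp
  with a show ?thesis by linarith
qed

lemma numeric:
  fixes D r m :: nat
  assumes D: "real D \<ge> 2^64" and r: "real r \<ge> 400 * real D / log 2 (real D)"
    and m: "m = nat \<lfloor>log 2 (real D)/2\<rfloor>"
  shows "4 * (real ((m+1) * D * (D choose (m+1))) + 1) * (1 / real r ^ m) \<le> 1"
proof -
  define L where "L = log 2 (real D)"
  define x where "x = real D"
  define K where "K = real (m+1)"
  define C where "C = real (D choose (m+1))"
  have x64: "x \<ge> 2^64" using D by (simp add: x_def)
  have xpos: "x > 0" using x64 by (smt (verit) zero_less_power)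
  have L64: "L \<ge> 64"
  proof -
    have "log 2 ((2::real)^64) \<le> log 2 x" using x64 by (intro log_mono) auto
    moreover have "log 2 ((2::real)^64) = 64" by (subst log_nat_power) auto
    ultimately show ?thesis by (simp add: L_def x_def)
  qed
  have mL: "real m \<le> L/2" using m L64 unfolding L_def by linarith
  have fpos: "\<lfloor>L/2\<rfloor> \<ge> 0" using L64 by simp
  have mm: "real m = of_int \<lfloor>L/2\<rfloor>" using m fpos unfolding L_def by simp
  have fl: "L/2 < of_int \<lfloor>L/2\<rfloor> + 1" by linarith
  have LK: "L < 2*K" using fl mm unfolding K_def by simp linarith
  have "\<lfloor>L/2\<rfloor> \<ge> 32" using L64 by (simp add: le_floor_iff)
  hence m32: "m \<ge> 32" using m unfolding L_def by (simp add: le_nat_iff)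
  have xL: "x = 2 powr L" using xpos by (simp add: L_def x_def)
  have x4: "x \<le> 4^(m+1)"
  proof -
    have "x \<le> 2 powr (2*K)" unfolding xL using LK by (intro powr_mono) auto
    also have "2 powr (2*K) = (2::real)^(2*(m+1))" unfolding K_def
      by (metis of_nat_mult of_nat_numeral powr_realpow zero_less_numeral)
    also have "\<dots> = 4^(m+1)" by (simp add: power_mult)
    finally show ?thesis .
  qed
  have Kx: "K \<le> x"
  proof -
    have "m + 1 \<le> 2^m" by (induction m) auto
    hence "K \<le> 2^m" unfolding K_def by (metis of_nat_le_iff of_nat_numeral of_nat_power)
    also have "(2::real)^m = 2 powr (real m)" by (simp add: powr_realpow)
    also have "\<dots> \<le> 2 powr L" using mL L64 by (intro powr_mono) auto
    finally show ?thesis using xL by simp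
  qed
  have Kpos: "K > 0" by (simp add: K_def)
  have Lpos: "L > 0" using L64 by simp
  have R: "real r \<ge> 200 * x / K"
  proof -
    have "200 * x / K = 400 * x / (2*K)" by simp
    also have "\<dots> \<le> 400 * x / L" using LK Lpos xpos by (intro divide_left_mono) auto
    finally show ?thesis using r by (simp add: x_def L_def)
  qed
  have Rm: "real r ^ m \<ge> (200 * x / K)^m"
    using R by (intro power_mono) (use xpos Kpos in auto)
  have Cb: "C * fact (m+1) \<le> x^(m+1)"
  proof -
    have "(D choose (m+1)) * fact (m+1) \<le> D^(m+1)" by (rule binomial_fact_pow)
    hence "real ((D choose (m+1)) * fact (m+1)) \<le> real (D^(m+1))" by (rule of_nat_mono)
    thus ?thesis by (simp only: C_def x_def of_nat_mult of_nat_fact of_nat_power)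
  qed
  have KK: "K^(m+1) \<le> 3^(m+1) * fact (m+1)" unfolding K_def by (rule pow_le_3_fact)
  have C0: "C \<ge> 0" by (simp add: C_def)
  have t1: "K * x * C * K^m \<le> 48^(m+1) * x^m"
  proof -
    have "K * x * C * K^m = x * C * K^(m+1)" by (simp add: algebra_simps)
    also have "\<dots> \<le> x * C * (3^(m+1) * fact (m+1))"
      using KK xpos C0 by (intro mult_left_mono) auto
    also have "\<dots> = 3^(m+1) * x * (C * fact (m+1))" by (simp add: algebra_simps)
    also have "\<dots> \<le> 3^(m+1) * x * x^(m+1)" using Cb xpos by (intro mult_left_mono) auto
    also have "\<dots> = 3^(m+1) * x^m * (x * x)" by (simp add: algebra_simps)
    also have "\<dots> \<le> 3^(m+1) * x^m * (4^(m+1) * 4^(m+1))"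
      using x4 xpos by (intro mult_left_mono mult_mono) auto
    also have "\<dots> = 48^(m+1) * x^m"
    proof -
      have "(48::real)^(m+1) = (3*4*4)^(m+1)" by simp
      also have "\<dots> = 3^(m+1)*4^(m+1)*4^(m+1)" by (simp only: power_mult_distrib)
      finally show ?thesis by (simp only: mult_ac)
    qed
    finally show ?thesis .
  qed
  have t2: "K^m \<le> x^m" using Kx Kpos by (intro power_mono) auto
  have ni: "4 * 48^(m+1) + 4 \<le> (200::real)^m"
    using nat_ineq[OF m32] by (metis (mono_tags, lifting) of_nat_add of_nat_le_iff of_nat_mult of_nat_numeral of_nat_power)
  have "4 * (K * x * C + 1) * K^m = 4 * (K * x * C * K^m) + 4 * K^m" by (simp add: algebra_simps)
  also have "\<dots> \<le> 4 * (48^(m+1) * x^m) + 4 * x^m" using t1 t2 by linarith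
  also have "\<dots> = (4 * 48^(m+1) + 4) * x^m" by (simp add: algebra_simps)
  also have "\<dots> \<le> 200^m * x^m" using ni xpos by (intro mult_right_mono) auto
  finally have main: "4 * (K * x * C + 1) * K^m \<le> 200^m * x^m" .
  have "4 * (K * x * C + 1) \<le> 200^m * x^m / K^m"
    using main Kpos by (simp add: pos_le_divide_eq)
  also have "\<dots> = (200 * x / K)^m" by (simp add: power_divide power_mult_distrib)
  also have "\<dots> \<le> real r ^ m" by (rule Rm)
  finally have fin: "4 * (K * x * C + 1) \<le> real r ^ m" .
  have rpos: "real r ^ m > 0" using fin Kpos xpos C0
    by (smt (verit) mult_nonneg_nonneg)
  have "real ((m+1) * D * (D choose (m+1))) = K * x * C" by (simp only: K_def x_def C_def of_nat_mult)
  thus ?thesis using fin rpos by (simp add: divide_le_eq)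
qed


theorem lemma3:
  fixes V :: "'a set" and E :: "'a \<Rightarrow> 'a \<Rightarrow> bool"
  assumes "finite_simple_graph V E"
    and "real (max_degree V E) \<ge> 2 ^ 64"
  shows "\<exists>f :: 'a \<Rightarrow> nat.
           (\<forall>v\<in>V. f v \<in> {1..nat \<lceil>400 * real (max_degree V E) / log 2 (real (max_degree V E))\<rceil>}) \<and>
           (\<forall>v\<in>V. \<forall>i\<in>{1..nat \<lceil>400 * real (max_degree V E) / log 2 (real (max_degree V E))\<rceil>}.
              real (card {u \<in> neighbours V E v. f u = i}) \<le> log 2 (real (max_degree V E)) / 2)"
proof -
  define D where "D = max_degree V E"
  define L where "L = log 2 (real D)"
  define r where "r = nat \<lceil>400 * real D / L\<rceil>"
  define m where "m = nat \<lfloor>L/2\<rfloor>"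
  define k where "k = m+1"
  from assms(1) have finV: "finite V" and Ein: "\<And>u v. E u v \<Longrightarrow> u \<in> V \<and> v \<in> V"
    and Esym: "\<And>u v. E u v \<Longrightarrow> E v u" unfolding finite_simple_graph_def by auto
  have degb: "card (neighbours V E v) \<le> D" if "v \<in> V" for v
    unfolding D_def max_degree_def using finV that by (intro Max_ge) auto
  have finN: "finite (neighbours V E v)" for v using finV by (simp add: neighbours_def)
  have NV: "neighbours V E v \<subseteq> V" for v by (auto simp: neighbours_def)
  have D64: "real D \<ge> 2^64" using assms(2) D_def by simp
  have Dgt1: "real D > 1" proof -
    have "(1::real) < 2^64" by simp
    thus ?thesis using D64 by linarith
  qed
  have Lpos: "L > 0" unfolding L_def using Dgt1 by simp
  have rge: "real r \<ge> 400 * real D / L" unfolding r_def by (rule real_nat_ceiling_ge)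
  have "400 * real D / L > 0" using Dgt1 Lpos by simp
  hence r1: "r \<ge> 1" using rge by linarith
  have mL: "real m \<le> L/2"
  proof -
    have "\<lfloor>L/2\<rfloor> \<ge> 0" using Lpos by simp
    thus ?thesis unfolding m_def by linarith
  qed
  define P where "P = Pi_pmf V (0::nat) (\<lambda>_. pmf_of_set {1..r})"
  define F where "F = {S. S \<subseteq> V \<and> card S = k \<and> (\<exists>v\<in>V. S \<subseteq> neighbours V E v)}"
  define ev where "ev = (\<lambda>S. {f::'a\<Rightarrow>nat. \<forall>u\<in>S. \<forall>w\<in>S. f u = f w})"
  define G where "G = (\<lambda>S::'a set. {S'. S' \<inter> S \<noteq> {}})"
  define d where "d = k * D * (D choose k)"
  define p where "p = 1 / real r ^ m"
  have finF: "finite F"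
    by (rule finite_subset[of _ "Pow V"]) (use finV in \<open>auto simp: F_def\<close>)
  have setP: "set_pmf P = PiE_dflt V 0 (\<lambda>_. {1..r})"
    unfolding P_def using finV r1 by (simp add: set_Pi_pmf o_def)
  have Gcard: "card (G A \<inter> F) \<le> d" if A: "A \<in> F" for A
  proof -
    have AV: "A \<subseteq> V" and cA: "card A = k" using A by (auto simp: F_def)
    have finA: "finite A" using AV finV finite_subset by blast
    define U where "U = (\<lambda>w. {S. S \<subseteq> neighbours V E w \<and> card S = k})"
    have finU: "finite (U w)" for w
      by (rule finite_subset[of _ "Pow (neighbours V E w)"]) (use finN in \<open>auto simp: U_def\<close>)
    have cU: "card (U w) \<le> D choose k" if "w \<in> V" for w
    proof -
      have "card (U w) = card (neighbours V E w) choose k" unfolding U_def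
        by (rule n_subsets[OF finN])
      also have "\<dots> \<le> D choose k" by (rule binomial_right_mono) (use degb that in auto)
      finally show ?thesis .
    qed
    have sub: "G A \<inter> F \<subseteq> (\<Union>u\<in>A. \<Union>w\<in>neighbours V E u. U w)"
    proof
      fix S assume "S \<in> G A \<inter> F"
      then obtain u v where uS: "u \<in> S" and uA: "u \<in> A" and vV: "v \<in> V"
        and SN: "S \<subseteq> neighbours V E v" and cS: "card S = k"
        by (auto simp: G_def F_def)
      have "E v u" using SN uS by (auto simp: neighbours_def)
      hence "v \<in> neighbours V E u" using Esym vV by (auto simp: neighbours_def)
      thus "S \<in> (\<Union>u\<in>A. \<Union>w\<in>neighbours V E u. U w)"
        using uA SN cS by (auto simp: U_def)
    qed
    have "card (G A \<inter> F) \<le> card (\<Union>u\<in>A. \<Union>w\<in>neighbours V E u. U w)"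
      by (rule card_mono[OF _ sub]) (use finA finN finU in auto)
    also have "\<dots> \<le> (\<Sum>u\<in>A. card (\<Union>w\<in>neighbours V E u. U w))" by (rule card_UN_le[OF finA])
    also have "\<dots> \<le> (\<Sum>u\<in>A. \<Sum>w\<in>neighbours V E u. card (U w))"
      by (rule sum_mono, rule card_UN_le[OF finN])
    also have "\<dots> \<le> (\<Sum>u\<in>A. \<Sum>w\<in>neighbours V E u. D choose k)"
      by (intro sum_mono cU) (use NV in auto)
    also have "\<dots> = (\<Sum>u\<in>A. card (neighbours V E u) * (D choose k))" by simp
    also have "\<dots> \<le> (\<Sum>u\<in>A. D * (D choose k))"
      by (intro sum_mono mult_right_mono degb) (use AV in auto)
    also have "\<dots> = d" using cA by (simp add: d_def)
    finally show ?thesis .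
  qed
  have pbound: "measure_pmf.prob P (ev A) \<le> p" if A: "A \<in> F" for A
  proof -
    have AV: "A \<subseteq> V" and cA: "card A = k" using A by (auto simp: F_def)
    have finA: "finite A" using AV finV finite_subset by blast
    have Ane: "A \<noteq> {}" using cA k_def by auto
    then obtain a where aA: "a \<in> A" by blast
    define C where "C = (\<lambda>c. {f::'a\<Rightarrow>nat. \<forall>u\<in>A. f u = c})"
    have pc: "measure_pmf.prob P (C c) = (1 / real r) ^ k" if c: "c \<in> {1..r}" for c
    proof -
      have "C c = Pi V (\<lambda>u. if u \<in> A then {c} else UNIV)"
      proof (rule set_eqI)
        fix f :: "'a \<Rightarrow> nat"
        have "f \<in> Pi V (\<lambda>u. if u \<in> A then {c} else UNIV) \<longleftrightarrow> (\<forall>u\<in>V. u \<in> A \<longrightarrow> f u = c)"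
          by (auto simp: Pi_def)
        also have "\<dots> \<longleftrightarrow> f \<in> C c" using AV by (auto simp: C_def)
        finally show "f \<in> C c \<longleftrightarrow> f \<in> Pi V (\<lambda>u. if u \<in> A then {c} else UNIV)" by simp
      qed
      hence "measure_pmf.prob P (C c) = measure_pmf.prob P (Pi V (\<lambda>u. if u \<in> A then {c} else UNIV))"
        by (simp only:)
      also have "\<dots> = (\<Prod>u\<in>V. measure_pmf.prob (pmf_of_set {1..r}) (if u \<in> A then {c} else UNIV))"
        unfolding P_def by (rule measure_Pi_pmf_Pi[OF finV])
      also have "\<dots> = (\<Prod>u\<in>V. if u \<in> A then 1 / real r else 1)"
      proof (rule prod.cong[OF refl])
        fix u
        have cc: "{1..r} \<inter> {c} = {c}" using c by auto
        have ne: "{1..r} \<noteq> {}" using r1 by auto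
        show "measure_pmf.prob (pmf_of_set {1..r}) (if u \<in> A then {c} else UNIV) = (if u \<in> A then 1 / real r else 1)"
        proof (cases "u \<in> A")
          case True
          have "measure_pmf.prob (pmf_of_set {1..r}) {c} = real (card ({1..r} \<inter> {c})) / real (card {1..r})"
            by (rule measure_pmf_of_set[OF ne]) simp
          also have "\<dots> = 1 / real r" unfolding cc by simp
          finally show ?thesis using True by simp
        next
          case False
          thus ?thesis by simp
        qed
      qed
      also have "\<dots> = (1 / real r) ^ card (V \<inter> A)" by (subst prod.inter_restrict[OF finV, symmetric]) simp
      also have "V \<inter> A = A" using AV by auto
      finally show ?thesis using cA by simp
    qed
    have "measure_pmf.prob P (ev A) = measure_pmf.prob P (ev A \<inter> set_pmf P)"
      by (simp only: measure_Int_set_pmf)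
    also have "\<dots> \<le> measure_pmf.prob P (\<Union>c\<in>{1..r}. C c)"
    proof (rule measure_pmf.finite_measure_mono)
      show "ev A \<inter> set_pmf P \<subseteq> (\<Union>c\<in>{1..r}. C c)"
      proof
        fix f assume f: "f \<in> ev A \<inter> set_pmf P"
        hence "f a \<in> {1..r}" using aA AV by (auto simp: setP PiE_dflt_def)
        moreover have "f \<in> C (f a)" using f aA unfolding ev_def C_def by blast
        ultimately show "f \<in> (\<Union>c\<in>{1..r}. C c)" by blast
      qed
    qed simp
    also have "\<dots> \<le> (\<Sum>c\<in>{1..r}. measure_pmf.prob P (C c))"
      by (rule measure_pmf.finite_measure_subadditive_finite) auto
    also have "\<dots> = (\<Sum>c\<in>{1..r}. (1 / real r) ^ k)" by (rule sum.cong) (auto simp: pc)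
    also have "\<dots> = real r * (1 / real r) ^ (m+1)" by (simp add: k_def)
    also have "\<dots> = p"
    proof -
      have rp: "real r > 0" using r1 by simp
      have "real r * (1 / real r) ^ (m+1) = real r * (1 / real r) * (1 / real r) ^ m" by simp
      also have "\<dots> = (1 / real r) ^ m" using rp by simp
      also have "\<dots> = p" by (simp add: p_def power_one_over)
      finally show ?thesis .
    qed
    finally show ?thesis .
  qed
  have indep: "measure_pmf.prob P (ev A \<inter> {\<omega>. \<forall>B\<in>T. \<omega> \<notin> ev B}) \<le> p * measure_pmf.prob P {\<omega>. \<forall>B\<in>T. \<omega> \<notin> ev B}"
    if A: "A \<in> F" and T: "T \<subseteq> F" and TG: "T \<inter> G A = {}" and AT: "A \<notin> T" for A T
  proof -
    have AV: "A \<subseteq> V" using A by (auto simp: F_def)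
    have disj: "B \<inter> A = {}" if "B \<in> T" for B using TG that by (auto simp: G_def)
    have "measure_pmf.prob P (ev A \<inter> {\<omega>. \<forall>B\<in>T. \<omega> \<notin> ev B}) =
          measure_pmf.prob P (ev A) * measure_pmf.prob P {\<omega>. \<forall>B\<in>T. \<omega> \<notin> ev B}"
      unfolding P_def
    proof (rule Pi_pmf_indep[OF finV AV])
      fix f g :: "'a \<Rightarrow> nat" assume "\<forall>u\<in>A. f u = g u"
      thus "f \<in> ev A \<longleftrightarrow> g \<in> ev A" by (auto simp: ev_def)
    next
      fix f g :: "'a \<Rightarrow> nat" assume fg: "\<forall>u. u \<notin> A \<longrightarrow> f u = g u"
      have "f \<in> ev B \<longleftrightarrow> g \<in> ev B" if "B \<in> T" for B
      proof -
        have "\<forall>u\<in>B. f u = g u" using fg disj[OF that] by blast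
        thus ?thesis by (auto simp: ev_def)
      qed
      thus "f \<in> {\<omega>. \<forall>B\<in>T. \<omega> \<notin> ev B} \<longleftrightarrow> g \<in> {\<omega>. \<forall>B\<in>T. \<omega> \<notin> ev B}" by auto
    qed
    also have "\<dots> \<le> p * measure_pmf.prob P {\<omega>. \<forall>B\<in>T. \<omega> \<notin> ev B}"
      using pbound[OF A] by (intro mult_right_mono) auto
    finally show ?thesis .
  qed
  have pd: "4 * (real d + 1) * p \<le> 1"
    unfolding d_def p_def k_def
    by (rule numeric[OF D64]) (use rge in \<open>auto simp: L_def m_def\<close>)
  have p0: "0 \<le> p" by (simp add: p_def)
  have pos: "measure_pmf.prob P {\<omega>. \<forall>B\<in>F. \<omega> \<notin> ev B} > 0"
    by (rule lll[OF finF Gcard p0 pd indep])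
  have "{\<omega>. \<forall>B\<in>F. \<omega> \<notin> ev B} \<inter> set_pmf P \<noteq> {}"
  proof
    assume e: "{\<omega>. \<forall>B\<in>F. \<omega> \<notin> ev B} \<inter> set_pmf P = {}"
    have "measure_pmf.prob P {\<omega>. \<forall>B\<in>F. \<omega> \<notin> ev B} = measure_pmf.prob P ({\<omega>. \<forall>B\<in>F. \<omega> \<notin> ev B} \<inter> set_pmf P)"
      by (simp only: measure_Int_set_pmf)
    hence "measure_pmf.prob P {\<omega>. \<forall>B\<in>F. \<omega> \<notin> ev B} = 0" unfolding e by simp
    with pos show False by simp
  qed
  then obtain f where fF: "\<forall>B\<in>F. f \<notin> ev B" and fP: "f \<in> set_pmf P" by blast
  have frange: "\<forall>v\<in>V. f v \<in> {1..r}" using fP by (auto simp: setP PiE_dflt_def)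
  have fbound: "real (card {u \<in> neighbours V E v. f u = i}) \<le> L / 2" if vV: "v \<in> V" for v i
  proof -
    have "card {u \<in> neighbours V E v. f u = i} \<le> m"
    proof (rule ccontr)
      assume "\<not> ?thesis"
      hence h: "k \<le> card {u \<in> neighbours V E v. f u = i}" by (simp add: k_def)
      obtain S where S: "S \<subseteq> {u \<in> neighbours V E v. f u = i}" "card S = k" "finite S"
        by (rule obtain_subset_with_card_n[OF h])
      have "S \<in> F" using S vV NV by (auto simp: F_def)
      moreover have "f \<in> ev S" using S unfolding ev_def by blast
      ultimately show False using fF by blast
    qed
    hence "real (card {u \<in> neighbours V E v. f u = i}) \<le> real m" by simp
    thus ?thesis using mL by linarith
  qed
  have L_eq: "log 2 (real (max_degree V E)) = L" by (simp add: L_def D_def)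
  have r_eq: "nat \<lceil>400 * real (max_degree V E) / L\<rceil> = r"
    by (simp add: r_def D_def)
  show ?thesis unfolding L_eq r_eq using frange fbound by (intro exI[of _ f]) auto
qed

end
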